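(* Let $R$ be a commutative ring with identity and $q(R)$ its classical ring of quotients. Then (1) $R$ is roughly reduced if and only if $q(R)$ is roughly reduced; (2) $R$ is roughly complemented if and only if $q(R)$ is roughly complemented.
   Context: For a ring $A$: $\mathfrak{N}(A)$ is the nilradical, $\mathrm{reg}(A)$ the regular elements, $q(A)$ the localization at $\mathrm{reg}(A)$, $\mathrm{areg}(A)=\{x: x+\mathfrak{N}(A)\in\mathrm{reg}(A/\mathfrak{N}(A))\}$, and $\eta(A)=\bigcup_{s\in\mathrm{areg}(A)}\mathrm{Ann}(s)$. $A$ is roughly reduced if $\eta(A)=\mathfrak{N}(A)$. $A$ is roughly complemented if for every $a\in A$ there is $b$ with $ab=0$ and $a+b\in\mathrm{areg}(A)$. *)

theory Defs
  imports "HOL-Algebra.QuotRing"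
begin

definition nilrad :: "('a, 'b) ring_scheme \<Rightarrow> 'a set" where
  "nilrad R = {x \<in> carrier R. \<exists>n::nat. x [^]\<^bsub>R\<^esub> n = \<zero>\<^bsub>R\<^esub>}"

definition reg :: "('a, 'b) ring_scheme \<Rightarrow> 'a set" where
  "reg R = {x \<in> carrier R. \<forall>y \<in> carrier R. x \<otimes>\<^bsub>R\<^esub> y = \<zero>\<^bsub>R\<^esub> \<longrightarrow> y = \<zero>\<^bsub>R\<^esub>}"

definition areg :: "('a, 'b) ring_scheme \<Rightarrow> 'a set" where
  "areg R = {x \<in> carrier R. (nilrad R +>\<^bsub>R\<^esub> x) \<in> reg (R Quot (nilrad R))}"

definition ann :: "('a, 'b) ring_scheme \<Rightarrow> 'a \<Rightarrow> 'a set" where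
  "ann R s = {y \<in> carrier R. s \<otimes>\<^bsub>R\<^esub> y = \<zero>\<^bsub>R\<^esub>}"

definition eta :: "('a, 'b) ring_scheme \<Rightarrow> 'a set" where
  "eta R = (\<Union>s \<in> areg R. ann R s)"

definition roughly_reduced :: "('a, 'b) ring_scheme \<Rightarrow> bool" where
  "roughly_reduced R \<longleftrightarrow> eta R = nilrad R"

definition roughly_complemented :: "('a, 'b) ring_scheme \<Rightarrow> bool" where
  "roughly_complemented R \<longleftrightarrow>
     (\<forall>a \<in> carrier R. \<exists>b \<in> carrier R. a \<otimes>\<^bsub>R\<^esub> b = \<zero>\<^bsub>R\<^esub> \<and> a \<oplus>\<^bsub>R\<^esub> b \<in> areg R)"

text \<open>The classical ring of quotients q(R) = localization of R at reg(R):
  fractions a/s with s regular, a/s = b/t iff u(at - bs) = 0 for some regular u.\<close>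

definition frac_rel :: "('a, 'b) ring_scheme \<Rightarrow> (('a \<times> 'a) \<times> ('a \<times> 'a)) set" where
  "frac_rel R = {((a, s), (b, t)). a \<in> carrier R \<and> s \<in> reg R \<and> b \<in> carrier R \<and> t \<in> reg R \<and>
      (\<exists>u \<in> reg R. u \<otimes>\<^bsub>R\<^esub> (a \<otimes>\<^bsub>R\<^esub> t \<ominus>\<^bsub>R\<^esub> b \<otimes>\<^bsub>R\<^esub> s) = \<zero>\<^bsub>R\<^esub>)}"

definition frac_class :: "('a, 'b) ring_scheme \<Rightarrow> 'a \<Rightarrow> 'a \<Rightarrow> ('a \<times> 'a) set" where
  "frac_class R a s = frac_rel R `` {(a, s)}"

text \<open>Operations on classes, defined via representatives (the union of the
  classes of all representative combinations, which is a single class).\<close>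
definition qring :: "('a, 'b) ring_scheme \<Rightarrow> ('a \<times> 'a) set ring" where
  "qring R = \<lparr> carrier = (carrier R \<times> reg R) // frac_rel R,
     monoid.mult = (\<lambda>X Y. \<Union>{frac_class R (a \<otimes>\<^bsub>R\<^esub> b) (s \<otimes>\<^bsub>R\<^esub> t) | a s b t. (a, s) \<in> X \<and> (b, t) \<in> Y}),
     one = frac_class R \<one>\<^bsub>R\<^esub> \<one>\<^bsub>R\<^esub>,
     zero = frac_class R \<zero>\<^bsub>R\<^esub> \<one>\<^bsub>R\<^esub>,
     add = (\<lambda>X Y. \<Union>{frac_class R (a \<otimes>\<^bsub>R\<^esub> t \<oplus>\<^bsub>R\<^esub> b \<otimes>\<^bsub>R\<^esub> s) (s \<otimes>\<^bsub>R\<^esub> t) | a s b t. (a, s) \<in> X \<and> (b, t) \<in> Y}) \<rparr>"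

end

theory Submission imports Defs begin

context cring begin

lemma (in cring) nil_sum_aux:
  assumes x: "x \<in> carrier R" and y: "y \<in> carrier R"
  shows "\<exists>A \<in> carrier R. (x \<oplus> y) [^] (k::nat) = x \<otimes> A \<oplus> y [^] k"
proof (induction k)
  case 0
  show ?case using x by (intro bexI[of _ \<zero>]) auto
next
  case (Suc k)
  then obtain A where A: "A \<in> carrier R" "(x \<oplus> y) [^] k = x \<otimes> A \<oplus> y [^] k" by blast
  have "(x \<oplus> y) [^] Suc k = (x \<otimes> A \<oplus> y [^] k) \<otimes> (x \<oplus> y)" using A by simp
  also have "\<dots> = x \<otimes> (A \<otimes> (x \<oplus> y) \<oplus> y [^] k) \<oplus> y [^] Suc k"
  proof -
    have yk: "y [^] k \<in> carrier R" using y by simp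
    have h: "\<And>Y. Y \<in> carrier R \<Longrightarrow> (x \<otimes> A \<oplus> Y) \<otimes> (x \<oplus> y) = x \<otimes> (A \<otimes> (x \<oplus> y) \<oplus> Y) \<oplus> Y \<otimes> y"
      using x y A(1) by algebra
    show ?thesis using h[OF yk] by simp
  qed
  finally show ?case using x y A(1) by blast
qed

lemma nilrad_ideal: "ideal (nilrad R) R"
proof (rule idealI)
  show "ring R" by (rule ring_axioms)
  have sum: "x \<oplus> y \<in> nilrad R" if "x \<in> nilrad R" "y \<in> nilrad R" for x y
  proof -
    from that obtain n m where x: "x \<in> carrier R" "x [^] (n::nat) = \<zero>"
      and y: "y \<in> carrier R" "y [^] (m::nat) = \<zero>" by (auto simp: nilrad_def)
    obtain A where A: "A \<in> carrier R" "(x \<oplus> y) [^] m = x \<otimes> A \<oplus> y [^] m"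
      using nil_sum_aux x(1) y(1) by blast
    have "(x \<oplus> y) [^] (m * n) = ((x \<oplus> y) [^] m) [^] n"
      using x y by (simp add: nat_pow_pow)
    also have "\<dots> = (x \<otimes> A) [^] n" using A x y by simp
    also have "\<dots> = x [^] n \<otimes> A [^] n" using x A by (simp add: pow_mult_distrib m_comm)
    also have "\<dots> = \<zero>" using x A by simp
    finally show ?thesis using x y by (auto simp: nilrad_def)
  qed
  have mul: "x \<otimes> a \<in> nilrad R" if "a \<in> nilrad R" "x \<in> carrier R" for a x
  proof -
    from that obtain n where a: "a \<in> carrier R" "a [^] (n::nat) = \<zero>" by (auto simp: nilrad_def)
    have "(x \<otimes> a) [^] n = x [^] n \<otimes> a [^] n" using a that by (simp add: pow_mult_distrib m_comm)
    then show ?thesis using a that by (auto simp: nilrad_def)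
  qed
  show "subgroup (nilrad R) (add_monoid R)"
  proof
    show "nilrad R \<subseteq> carrier (add_monoid R)" by (auto simp: nilrad_def)
    show "\<one>\<^bsub>add_monoid R\<^esub> \<in> nilrad R" by (auto simp: nilrad_def intro!: exI[of _ 1])
    show "x \<otimes>\<^bsub>add_monoid R\<^esub> y \<in> nilrad R" if "x \<in> nilrad R" "y \<in> nilrad R" for x y
      using sum that by simp
    show "inv\<^bsub>add_monoid R\<^esub> x \<in> nilrad R" if "x \<in> nilrad R" for x
    proof -
      have xc: "x \<in> carrier R" using that by (auto simp: nilrad_def)
      have "(\<ominus> \<one>) \<otimes> x \<in> nilrad R" using mul that by simp
      then show ?thesis using xc by (simp add: a_inv_def[symmetric] l_minus)
    qed
  qed
  show "\<And>a x. a \<in> nilrad R \<Longrightarrow> x \<in> carrier R \<Longrightarrow> x \<otimes> a \<in> nilrad R" by (rule mul)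
  show "\<And>a x. a \<in> nilrad R \<Longrightarrow> x \<in> carrier R \<Longrightarrow> a \<otimes> x \<in> nilrad R"
    using mul by (auto simp: nilrad_def m_comm)
qed

lemma areg_char:
  "areg R = {x \<in> carrier R. \<forall>y \<in> carrier R. x \<otimes> y \<in> nilrad R \<longrightarrow> y \<in> nilrad R}"
proof -
  interpret I: ideal "nilrad R" R by (rule nilrad_ideal)
  have eqI: "nilrad R +> y = nilrad R \<longleftrightarrow> y \<in> nilrad R" if "y \<in> carrier R" for y
  proof
    assume "nilrad R +> y = nilrad R"
    with I.a_rcos_self[OF that] show "y \<in> nilrad R" by simp
  next
    assume "y \<in> nilrad R"
    then show "nilrad R +> y = nilrad R" by (rule I.a_rcos_const)
  qed
  have car: "carrier (R Quot nilrad R) = (\<Union>a\<in>carrier R. {nilrad R +> a})"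
  proof -
    have "carrier (R Quot nilrad R) = a_rcosets (nilrad R)" by (simp add: FactRing_def)
    then show ?thesis by (simp only: A_RCOSETS_def')
  qed
  have mu: "(nilrad R +> x) \<otimes>\<^bsub>R Quot nilrad R\<^esub> (nilrad R +> y) = nilrad R +> (x \<otimes> y)"
    if "x \<in> carrier R" "y \<in> carrier R" for x y
    using I.rcoset_mult_add[OF that] by (simp add: FactRing_def)
  have ze: "\<zero>\<^bsub>R Quot nilrad R\<^esub> = nilrad R" by (simp add: FactRing_def)
  show ?thesis
  proof (intro equalityI subsetI)
    fix x assume xa: "x \<in> areg R"
    then have x: "x \<in> carrier R" and xr: "nilrad R +> x \<in> reg (R Quot nilrad R)"
      unfolding areg_def by simp_all
    have r: "Y = nilrad R" if "Y \<in> carrier (R Quot nilrad R)"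
      "(nilrad R +> x) \<otimes>\<^bsub>R Quot nilrad R\<^esub> Y = nilrad R" for Y
      using xr that unfolding reg_def ze by blast
    have "\<forall>y \<in> carrier R. x \<otimes> y \<in> nilrad R \<longrightarrow> y \<in> nilrad R"
    proof (intro ballI impI)
      fix y assume y: "y \<in> carrier R" and xy: "x \<otimes> y \<in> nilrad R"
      have Yc: "nilrad R +> y \<in> carrier (R Quot nilrad R)" unfolding car using y by blast
      have "(nilrad R +> x) \<otimes>\<^bsub>R Quot nilrad R\<^esub> (nilrad R +> y) = nilrad R"
        unfolding mu[OF x y] by (rule I.a_rcos_const[OF xy])
      then have "nilrad R +> y = nilrad R" by (rule r[OF Yc])
      then show "y \<in> nilrad R" using eqI[OF y] by blast
    qed
    then show "x \<in> {x \<in> carrier R. \<forall>y \<in> carrier R. x \<otimes> y \<in> nilrad R \<longrightarrow> y \<in> nilrad R}"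
      using x by blast
  next
    fix x assume "x \<in> {x \<in> carrier R. \<forall>y \<in> carrier R. x \<otimes> y \<in> nilrad R \<longrightarrow> y \<in> nilrad R}"
    then have x: "x \<in> carrier R" and r: "\<And>y. y \<in> carrier R \<Longrightarrow> x \<otimes> y \<in> nilrad R \<Longrightarrow> y \<in> nilrad R"
      by blast+
    have Xc: "nilrad R +> x \<in> carrier (R Quot nilrad R)" unfolding car using x by blast
    have Z: "Y = nilrad R" if Y: "Y \<in> carrier (R Quot nilrad R)"
      and YY: "(nilrad R +> x) \<otimes>\<^bsub>R Quot nilrad R\<^esub> Y = nilrad R" for Y
    proof -
      obtain y where y: "y \<in> carrier R" "Y = nilrad R +> y" using Y unfolding car by blast
      have "nilrad R +> (x \<otimes> y) = nilrad R" using YY unfolding y(2) mu[OF x y(1)] .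
      then have "x \<otimes> y \<in> nilrad R" using eqI[of "x \<otimes> y"] x y(1) by blast
      then have "y \<in> nilrad R" by (rule r[OF y(1)])
      then show ?thesis unfolding y(2) by (rule I.a_rcos_const)
    qed
    have "nilrad R +> x \<in> reg (R Quot nilrad R)"
      unfolding reg_def ze using Xc Z by blast
    then show "x \<in> areg R" unfolding areg_def using x by blast
  qed
qed

lemma reg_carr[simp]: "s \<in> reg R \<Longrightarrow> s \<in> carrier R"
  by (simp add: reg_def)

lemma reg_cancel:
  assumes s: "s \<in> reg R" and x: "x \<in> carrier R" and y: "y \<in> carrier R" and e: "s \<otimes> x = s \<otimes> y"
  shows "x = y"
proof -
  have sc: "s \<in> carrier R" using s by simp
  have "s \<otimes> (x \<ominus> y) = s \<otimes> x \<ominus> s \<otimes> y" using sc x y by algebra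
  also have "\<dots> = \<zero>" using e sc y by (simp add: a_minus_def r_neg)
  finally have "x \<ominus> y = \<zero>" using s x y unfolding reg_def by blast
  moreover have "x = (x \<ominus> y) \<oplus> y" using x y by algebra
  ultimately show ?thesis using y by simp
qed

lemma reg_one[simp]: "\<one> \<in> reg R"
  unfolding reg_def by (simp del: reg_carr)

lemma reg_mult[simp]:
  assumes s: "s \<in> reg R" and t: "t \<in> reg R" shows "s \<otimes> t \<in> reg R"
proof -
  have sc: "s \<in> carrier R" and tc: "t \<in> carrier R" using s t by simp_all
  have "y = \<zero>" if y: "y \<in> carrier R" and e: "s \<otimes> t \<otimes> y = \<zero>" for y
  proof -
    have "s \<otimes> (t \<otimes> y) = \<zero>" using e sc tc y by (simp add: m_assoc)
    then have "t \<otimes> y = \<zero>" using s tc y unfolding reg_def by blast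
    then show "y = \<zero>" using t y unfolding reg_def by blast
  qed
  then show ?thesis using sc tc unfolding reg_def by blast
qed

lemma reg_pow[simp]: "s \<in> reg R \<Longrightarrow> s [^] (n::nat) \<in> reg R"
  by (induction n) (simp_all del: reg_carr)

lemma frac_rel_iff:
  "((a, s), (b, t)) \<in> frac_rel R \<longleftrightarrow>
     a \<in> carrier R \<and> s \<in> reg R \<and> b \<in> carrier R \<and> t \<in> reg R \<and> a \<otimes> t = b \<otimes> s"
proof
  assume h: "((a, s), (b, t)) \<in> frac_rel R"
  then obtain u where c: "a \<in> carrier R" "s \<in> reg R" "b \<in> carrier R" "t \<in> reg R"
    and u: "u \<in> reg R" "u \<otimes> (a \<otimes> t \<ominus> b \<otimes> s) = \<zero>"
    by (auto simp: frac_rel_def)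
  have cc: "s \<in> carrier R" "t \<in> carrier R" using c by simp_all
  have "a \<otimes> t \<ominus> b \<otimes> s \<in> carrier R" using c cc by simp
  then have "a \<otimes> t \<ominus> b \<otimes> s = \<zero>" using u unfolding reg_def by blast
  moreover have "a \<otimes> t = (a \<otimes> t \<ominus> b \<otimes> s) \<oplus> b \<otimes> s" using c cc by algebra
  ultimately show "a \<in> carrier R \<and> s \<in> reg R \<and> b \<in> carrier R \<and> t \<in> reg R \<and> a \<otimes> t = b \<otimes> s"
    using c by simp
next
  assume h: "a \<in> carrier R \<and> s \<in> reg R \<and> b \<in> carrier R \<and> t \<in> reg R \<and> a \<otimes> t = b \<otimes> s"
  then have "\<one> \<otimes> (a \<otimes> t \<ominus> b \<otimes> s) = \<zero>" by (simp add: a_minus_def r_neg)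
  then show "((a, s), (b, t)) \<in> frac_rel R" using h reg_one unfolding frac_rel_def by blast
qed

lemma frac_equiv: "equiv (carrier R \<times> reg R) (frac_rel R)"
proof (rule equivI)
  show "frac_rel R \<subseteq> (carrier R \<times> reg R) \<times> (carrier R \<times> reg R)"
    by (auto simp: frac_rel_iff)
  show "refl_on (carrier R \<times> reg R) (frac_rel R)"
    by (auto simp: refl_on_def frac_rel_iff m_comm)
  show "sym (frac_rel R)"
    by (auto simp: sym_def frac_rel_iff)
  show "trans (frac_rel R)"
  proof (rule transI)
    fix x y z assume "(x, y) \<in> frac_rel R" "(y, z) \<in> frac_rel R"
    then obtain a s b t c u where xyz: "x = (a, s)" "y = (b, t)" "z = (c, u)"
      and h: "a \<in> carrier R" "s \<in> reg R" "b \<in> carrier R" "t \<in> reg R" "c \<in> carrier R" "u \<in> reg R"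
      "a \<otimes> t = b \<otimes> s" "b \<otimes> u = c \<otimes> t"
      by (cases x, cases y, cases z) (auto simp: frac_rel_iff)
    have sc: "s \<in> carrier R" "t \<in> carrier R" "u \<in> carrier R" using h by auto
    have "t \<otimes> (a \<otimes> u) = (a \<otimes> t) \<otimes> u" using h(1) sc by algebra
    also have "\<dots> = (b \<otimes> u) \<otimes> s" using h(3,7) sc by (simp add: m_ac)
    also have "\<dots> = t \<otimes> (c \<otimes> s)" using h(5,8) sc by (simp add: m_ac)
    finally have "a \<otimes> u = c \<otimes> s"
      using reg_cancel[OF h(4)] h(1,5) sc by simp
    then show "(x, z) \<in> frac_rel R" using xyz h by (simp add: frac_rel_iff)
  qed
qed

lemma class_eq:
  assumes "a \<in> carrier R" "s \<in> reg R" "b \<in> carrier R" "t \<in> reg R"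
  shows "frac_class R a s = frac_class R b t \<longleftrightarrow> a \<otimes> t = b \<otimes> s"
  unfolding frac_class_def using eq_equiv_class_iff[OF frac_equiv] assms
  by (simp add: frac_rel_iff)

lemma class_mem:
  "(b, t) \<in> frac_class R a s \<longleftrightarrow> ((a, s), (b, t)) \<in> frac_rel R"
  by (simp add: frac_class_def)

lemma q_carrier:
  "carrier (qring R) = {frac_class R a s | a s. a \<in> carrier R \<and> s \<in> reg R}"
  unfolding qring_def quotient_def frac_class_def by auto

lemma q_carrier_class[simp]:
  "a \<in> carrier R \<Longrightarrow> s \<in> reg R \<Longrightarrow> frac_class R a s \<in> carrier (qring R)"
  using q_carrier by blast

lemma q_carrierE:
  assumes "X \<in> carrier (qring R)"
  obtains a s where "a \<in> carrier R" "s \<in> reg R" "X = frac_class R a s"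
  using assms q_carrier by blast

lemma q_zero: "\<zero>\<^bsub>qring R\<^esub> = frac_class R \<zero> \<one>"
  by (simp add: qring_def)

lemma q_one: "\<one>\<^bsub>qring R\<^esub> = frac_class R \<one> \<one>"
  by (simp add: qring_def)

lemma q_mult[simp]:
  assumes a: "a \<in> carrier R" and s: "s \<in> reg R" and b: "b \<in> carrier R" and t: "t \<in> reg R"
  shows "frac_class R a s \<otimes>\<^bsub>qring R\<^esub> frac_class R b t = frac_class R (a \<otimes> b) (s \<otimes> t)"
proof -
  have sc: "s \<in> carrier R" "t \<in> carrier R" using s t by auto
  have S: "{frac_class R (a' \<otimes> b') (s' \<otimes> t') | a' s' b' t'.
            (a', s') \<in> frac_class R a s \<and> (b', t') \<in> frac_class R b t} = {frac_class R (a \<otimes> b) (s \<otimes> t)}"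
  proof (intro equalityI subsetI)
    fix x assume "x \<in> {frac_class R (a' \<otimes> b') (s' \<otimes> t') | a' s' b' t'.
            (a', s') \<in> frac_class R a s \<and> (b', t') \<in> frac_class R b t}"
    then obtain a' s' b' t' where x: "x = frac_class R (a' \<otimes> b') (s' \<otimes> t')"
      and h: "a' \<in> carrier R" "s' \<in> reg R" "b' \<in> carrier R" "t' \<in> reg R"
        "a \<otimes> s' = a' \<otimes> s" "b \<otimes> t' = b' \<otimes> t"
      by (auto simp: class_mem frac_rel_iff)
    have sc': "s' \<in> carrier R" "t' \<in> carrier R" using h by auto
    have "(a' \<otimes> b') \<otimes> (s \<otimes> t) = (a' \<otimes> s) \<otimes> (b' \<otimes> t)" using h(1,3) sc by algebra
    also have "\<dots> = (a \<otimes> s') \<otimes> (b \<otimes> t')" using h(5,6) by simp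
    also have "\<dots> = (a \<otimes> b) \<otimes> (s' \<otimes> t')" using a b sc' by algebra
    finally have "x = frac_class R (a \<otimes> b) (s \<otimes> t)"
      using x h a b s t by (simp add: class_eq)
    then show "x \<in> {frac_class R (a \<otimes> b) (s \<otimes> t)}" by simp
  next
    fix x assume "x \<in> {frac_class R (a \<otimes> b) (s \<otimes> t)}"
    moreover have "(a, s) \<in> frac_class R a s" "(b, t) \<in> frac_class R b t"
      using a s b t sc by (auto simp: class_mem frac_rel_iff m_comm)
    ultimately show "x \<in> {frac_class R (a' \<otimes> b') (s' \<otimes> t') | a' s' b' t'.
            (a', s') \<in> frac_class R a s \<and> (b', t') \<in> frac_class R b t}" by blast
  qed
  show ?thesis by (simp add: qring_def S)
qed

lemma q_add[simp]:
  assumes a: "a \<in> carrier R" and s: "s \<in> reg R" and b: "b \<in> carrier R" and t: "t \<in> reg R"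
  shows "frac_class R a s \<oplus>\<^bsub>qring R\<^esub> frac_class R b t = frac_class R (a \<otimes> t \<oplus> b \<otimes> s) (s \<otimes> t)"
proof -
  have sc: "s \<in> carrier R" "t \<in> carrier R" using s t by auto
  have S: "{frac_class R (a' \<otimes> t' \<oplus> b' \<otimes> s') (s' \<otimes> t') | a' s' b' t'.
            (a', s') \<in> frac_class R a s \<and> (b', t') \<in> frac_class R b t} = {frac_class R (a \<otimes> t \<oplus> b \<otimes> s) (s \<otimes> t)}"
  proof (intro equalityI subsetI)
    fix x assume "x \<in> {frac_class R (a' \<otimes> t' \<oplus> b' \<otimes> s') (s' \<otimes> t') | a' s' b' t'.
            (a', s') \<in> frac_class R a s \<and> (b', t') \<in> frac_class R b t}"
    then obtain a' s' b' t' where x: "x = frac_class R (a' \<otimes> t' \<oplus> b' \<otimes> s') (s' \<otimes> t')"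
      and h: "a' \<in> carrier R" "s' \<in> reg R" "b' \<in> carrier R" "t' \<in> reg R"
        "a \<otimes> s' = a' \<otimes> s" "b \<otimes> t' = b' \<otimes> t"
      by (auto simp: class_mem frac_rel_iff)
    have sc': "s' \<in> carrier R" "t' \<in> carrier R" using h by auto
    have "(a' \<otimes> t' \<oplus> b' \<otimes> s') \<otimes> (s \<otimes> t) = (a' \<otimes> s) \<otimes> (t' \<otimes> t) \<oplus> (b' \<otimes> t) \<otimes> (s' \<otimes> s)"
      using h(1,3) sc sc' by algebra
    also have "\<dots> = (a \<otimes> s') \<otimes> (t' \<otimes> t) \<oplus> (b \<otimes> t') \<otimes> (s' \<otimes> s)" using h(5,6) by simp
    also have "\<dots> = (a \<otimes> t \<oplus> b \<otimes> s) \<otimes> (s' \<otimes> t')" using a b sc sc' by algebra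
    finally have "x = frac_class R (a \<otimes> t \<oplus> b \<otimes> s) (s \<otimes> t)"
      using x h a b s t sc sc' by (simp add: class_eq)
    then show "x \<in> {frac_class R (a \<otimes> t \<oplus> b \<otimes> s) (s \<otimes> t)}" by simp
  next
    fix x assume "x \<in> {frac_class R (a \<otimes> t \<oplus> b \<otimes> s) (s \<otimes> t)}"
    moreover have "(a, s) \<in> frac_class R a s" "(b, t) \<in> frac_class R b t"
      using a s b t sc by (auto simp: class_mem frac_rel_iff m_comm)
    ultimately show "x \<in> {frac_class R (a' \<otimes> t' \<oplus> b' \<otimes> s') (s' \<otimes> t') | a' s' b' t'.
            (a', s') \<in> frac_class R a s \<and> (b', t') \<in> frac_class R b t}" by blast
  qed
  show ?thesis by (simp add: qring_def S)
qed


lemma q_cring: "cring (qring R)"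
proof (rule cringI)
  show "abelian_group (qring R)"
  proof (rule abelian_groupI)
    fix x y assume "x \<in> carrier (qring R)" "y \<in> carrier (qring R)"
    then show "x \<oplus>\<^bsub>qring R\<^esub> y \<in> carrier (qring R)"
      by (auto elim!: q_carrierE)
  next
    show "\<zero>\<^bsub>qring R\<^esub> \<in> carrier (qring R)" by (simp add: q_zero)
  next
    fix x y z assume "x \<in> carrier (qring R)" "y \<in> carrier (qring R)" "z \<in> carrier (qring R)"
    then obtain a s b t c u where h: "a \<in> carrier R" "s \<in> reg R" "b \<in> carrier R" "t \<in> reg R"
      "c \<in> carrier R" "u \<in> reg R" and e: "x = frac_class R a s" "y = frac_class R b t" "z = frac_class R c u"
      by (auto elim!: q_carrierE)
    have sc: "s \<in> carrier R" "t \<in> carrier R" "u \<in> carrier R" using h by auto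
    show "x \<oplus>\<^bsub>qring R\<^esub> y \<oplus>\<^bsub>qring R\<^esub> z = x \<oplus>\<^bsub>qring R\<^esub> (y \<oplus>\<^bsub>qring R\<^esub> z)"
      using h sc unfolding e by (simp add: class_eq; insert h sc; algebra)
  next
    fix x y assume "x \<in> carrier (qring R)" "y \<in> carrier (qring R)"
    then obtain a s b t where h: "a \<in> carrier R" "s \<in> reg R" "b \<in> carrier R" "t \<in> reg R"
      and e: "x = frac_class R a s" "y = frac_class R b t"
      by (auto elim!: q_carrierE)
    have sc: "s \<in> carrier R" "t \<in> carrier R" using h by auto
    show "x \<oplus>\<^bsub>qring R\<^esub> y = y \<oplus>\<^bsub>qring R\<^esub> x"
      using h sc unfolding e by (simp add: class_eq; insert h sc; algebra)
  next
    fix x assume "x \<in> carrier (qring R)"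
    then obtain a s where h: "a \<in> carrier R" "s \<in> reg R" and e: "x = frac_class R a s"
      by (auto elim!: q_carrierE)
    have sc: "s \<in> carrier R" using h by auto
    show "\<zero>\<^bsub>qring R\<^esub> \<oplus>\<^bsub>qring R\<^esub> x = x"
      using h sc unfolding e q_zero by (simp add: class_eq; insert h sc; algebra)
  next
    fix x assume "x \<in> carrier (qring R)"
    then obtain a s where h: "a \<in> carrier R" "s \<in> reg R" and e: "x = frac_class R a s"
      by (auto elim!: q_carrierE)
    have sc: "s \<in> carrier R" using h by auto
    have "frac_class R (\<ominus> a) s \<oplus>\<^bsub>qring R\<^esub> x = \<zero>\<^bsub>qring R\<^esub>"
      using h sc unfolding e q_zero by (simp add: class_eq; insert h sc; algebra)
    then show "\<exists>y\<in>carrier (qring R). y \<oplus>\<^bsub>qring R\<^esub> x = \<zero>\<^bsub>qring R\<^esub>"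
      using h by (intro bexI[of _ "frac_class R (\<ominus> a) s"]) auto
  qed
next
  show "comm_monoid (qring R)"
  proof (rule comm_monoidI)
    fix x y assume "x \<in> carrier (qring R)" "y \<in> carrier (qring R)"
    then show "x \<otimes>\<^bsub>qring R\<^esub> y \<in> carrier (qring R)"
      by (auto elim!: q_carrierE)
  next
    show "\<one>\<^bsub>qring R\<^esub> \<in> carrier (qring R)" by (simp add: q_one)
  next
    fix x y z assume "x \<in> carrier (qring R)" "y \<in> carrier (qring R)" "z \<in> carrier (qring R)"
    then obtain a s b t c u where h: "a \<in> carrier R" "s \<in> reg R" "b \<in> carrier R" "t \<in> reg R"
      "c \<in> carrier R" "u \<in> reg R" and e: "x = frac_class R a s" "y = frac_class R b t" "z = frac_class R c u"
      by (auto elim!: q_carrierE)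
    have sc: "s \<in> carrier R" "t \<in> carrier R" "u \<in> carrier R" using h by auto
    show "x \<otimes>\<^bsub>qring R\<^esub> y \<otimes>\<^bsub>qring R\<^esub> z = x \<otimes>\<^bsub>qring R\<^esub> (y \<otimes>\<^bsub>qring R\<^esub> z)"
      using h sc unfolding e by (simp add: class_eq; insert h sc; algebra)
  next
    fix x assume "x \<in> carrier (qring R)"
    then obtain a s where h: "a \<in> carrier R" "s \<in> reg R" and e: "x = frac_class R a s"
      by (auto elim!: q_carrierE)
    have sc: "s \<in> carrier R" using h by auto
    show "\<one>\<^bsub>qring R\<^esub> \<otimes>\<^bsub>qring R\<^esub> x = x"
      using h sc unfolding e q_one by (simp add: class_eq; insert h sc; algebra)
  next
    fix x y assume "x \<in> carrier (qring R)" "y \<in> carrier (qring R)"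
    then obtain a s b t where h: "a \<in> carrier R" "s \<in> reg R" "b \<in> carrier R" "t \<in> reg R"
      and e: "x = frac_class R a s" "y = frac_class R b t"
      by (auto elim!: q_carrierE)
    have sc: "s \<in> carrier R" "t \<in> carrier R" using h by auto
    show "x \<otimes>\<^bsub>qring R\<^esub> y = y \<otimes>\<^bsub>qring R\<^esub> x"
      using h sc unfolding e by (simp add: class_eq; insert h sc; algebra)
  qed
next
  fix x y z assume "x \<in> carrier (qring R)" "y \<in> carrier (qring R)" "z \<in> carrier (qring R)"
  then obtain a s b t c u where h: "a \<in> carrier R" "s \<in> reg R" "b \<in> carrier R" "t \<in> reg R"
    "c \<in> carrier R" "u \<in> reg R" and e: "x = frac_class R a s" "y = frac_class R b t" "z = frac_class R c u"
    by (auto elim!: q_carrierE)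
  have sc: "s \<in> carrier R" "t \<in> carrier R" "u \<in> carrier R" using h by auto
  show "(x \<oplus>\<^bsub>qring R\<^esub> y) \<otimes>\<^bsub>qring R\<^esub> z = x \<otimes>\<^bsub>qring R\<^esub> z \<oplus>\<^bsub>qring R\<^esub> y \<otimes>\<^bsub>qring R\<^esub> z"
    using h sc unfolding e by (simp add: class_eq; insert h sc; algebra)
qed


lemma q_pow:
  assumes "a \<in> carrier R" "s \<in> reg R"
  shows "frac_class R a s [^]\<^bsub>qring R\<^esub> (n::nat) = frac_class R (a [^] n) (s [^] n)"
  using assms by (induction n) (simp_all add: q_one)

lemma q_is_zero:
  assumes "a \<in> carrier R" "s \<in> reg R"
  shows "frac_class R a s = \<zero>\<^bsub>qring R\<^esub> \<longleftrightarrow> a = \<zero>"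
  using assms by (simp add: q_zero class_eq)

lemma q_nilrad:
  assumes "a \<in> carrier R" "s \<in> reg R"
  shows "frac_class R a s \<in> nilrad (qring R) \<longleftrightarrow> a \<in> nilrad R"
  using assms by (simp add: nilrad_def q_pow q_is_zero)

lemma nilrad_carr: "x \<in> nilrad R \<Longrightarrow> x \<in> carrier R"
  by (simp add: nilrad_def)

lemma q_areg:
  assumes a: "a \<in> carrier R" and s: "s \<in> reg R"
  shows "frac_class R a s \<in> areg (qring R) \<longleftrightarrow> a \<in> areg R"
proof -
  interpret Q: cring "qring R" by (rule q_cring)
  show ?thesis
  proof
    assume h: "frac_class R a s \<in> areg (qring R)"
    show "a \<in> areg R" unfolding areg_char
    proof (intro CollectI conjI ballI impI a)
      fix y assume y: "y \<in> carrier R" "a \<otimes> y \<in> nilrad R"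
      have "frac_class R a s \<otimes>\<^bsub>qring R\<^esub> frac_class R y \<one> \<in> nilrad (qring R)"
        using a s y by (simp add: q_nilrad)
      then have "frac_class R y \<one> \<in> nilrad (qring R)"
        using h y unfolding Q.areg_char by auto
      then show "y \<in> nilrad R" using y by (simp add: q_nilrad)
    qed
  next
    assume h: "a \<in> areg R"
    show "frac_class R a s \<in> areg (qring R)" unfolding Q.areg_char
    proof (intro CollectI conjI ballI impI)
      show "frac_class R a s \<in> carrier (qring R)" using a s by simp
      fix Y assume Y: "Y \<in> carrier (qring R)" "frac_class R a s \<otimes>\<^bsub>qring R\<^esub> Y \<in> nilrad (qring R)"
      then obtain b t where b: "b \<in> carrier R" "t \<in> reg R" "Y = frac_class R b t"
        by (auto elim!: q_carrierE)
      have "a \<otimes> b \<in> nilrad R" using Y(2) a s b by (simp add: q_nilrad)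
      then have "b \<in> nilrad R" using h b unfolding areg_char by auto
      then show "Y \<in> nilrad (qring R)" using b by (simp add: q_nilrad)
    qed
  qed
qed

lemma eta_carr: "x \<in> eta R \<Longrightarrow> x \<in> carrier R"
  by (auto simp: eta_def ann_def)

lemma q_eta:
  assumes b: "b \<in> carrier R" and t: "t \<in> reg R"
  shows "frac_class R b t \<in> eta (qring R) \<longleftrightarrow> b \<in> eta R"
proof
  assume "frac_class R b t \<in> eta (qring R)"
  then obtain X where X: "X \<in> areg (qring R)" "X \<otimes>\<^bsub>qring R\<^esub> frac_class R b t = \<zero>\<^bsub>qring R\<^esub>"
    by (auto simp: eta_def ann_def)
  then obtain a s where a: "a \<in> carrier R" "s \<in> reg R" "X = frac_class R a s"
    by (auto simp: areg_def elim!: q_carrierE)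
  have "a \<in> areg R" using X(1) a q_areg by simp
  moreover have "a \<otimes> b = \<zero>" using X(2) a b t by (simp add: q_is_zero)
  ultimately show "b \<in> eta R" using b by (auto simp: eta_def ann_def)
next
  assume "b \<in> eta R"
  then obtain a where a: "a \<in> areg R" "a \<otimes> b = \<zero>" by (auto simp: eta_def ann_def)
  have ac: "a \<in> carrier R" using a by (simp add: areg_def)
  have "frac_class R a \<one> \<in> areg (qring R)" using a ac q_areg by simp
  moreover have "frac_class R a \<one> \<otimes>\<^bsub>qring R\<^esub> frac_class R b t = \<zero>\<^bsub>qring R\<^esub>"
    using a ac b t by (simp add: q_is_zero)
  ultimately show "frac_class R b t \<in> eta (qring R)"
    using b t unfolding eta_def ann_def by auto
qed

lemma part1: "roughly_reduced R \<longleftrightarrow> roughly_reduced (qring R)"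
proof
  assume h: "roughly_reduced R"
  have "eta (qring R) = nilrad (qring R)"
  proof (intro equalityI subsetI)
    fix X assume X: "X \<in> eta (qring R)"
    then have "X \<in> carrier (qring R)" by (auto simp: eta_def ann_def)
    then obtain b t where b: "b \<in> carrier R" "t \<in> reg R" "X = frac_class R b t" by (auto elim!: q_carrierE)
    then show "X \<in> nilrad (qring R)" using X h by (simp add: q_eta q_nilrad roughly_reduced_def)
  next
    fix X assume X: "X \<in> nilrad (qring R)"
    then have "X \<in> carrier (qring R)" by (auto simp: nilrad_def)
    then obtain b t where b: "b \<in> carrier R" "t \<in> reg R" "X = frac_class R b t" by (auto elim!: q_carrierE)
    then show "X \<in> eta (qring R)" using X h by (simp add: q_eta q_nilrad roughly_reduced_def)
  qed
  then show "roughly_reduced (qring R)" by (simp add: roughly_reduced_def)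
next
  assume h: "roughly_reduced (qring R)"
  have "eta R = nilrad R"
  proof (intro equalityI subsetI)
    fix b assume "b \<in> eta R"
    moreover then have "b \<in> carrier R" by (rule eta_carr)
    ultimately show "b \<in> nilrad R" using h q_eta[of b \<one>] q_nilrad[of b \<one>]
      by (simp add: roughly_reduced_def)
  next
    fix b assume "b \<in> nilrad R"
    moreover then have "b \<in> carrier R" by (rule nilrad_carr)
    ultimately show "b \<in> eta R" using h q_eta[of b \<one>] q_nilrad[of b \<one>]
      by (simp add: roughly_reduced_def)
  qed
  then show "roughly_reduced R" by (simp add: roughly_reduced_def)
qed

lemma nil_sq:
  assumes z: "z \<in> carrier R" and zz: "z \<otimes> z \<in> nilrad R"
  shows "z \<in> nilrad R"
proof -
  obtain n where n: "(z \<otimes> z) [^] (n::nat) = \<zero>" using zz unfolding nilrad_def by blast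
  have "(z \<otimes> z) [^] n = z [^] n \<otimes> z [^] n" using z by (rule pow_mult_distrib[OF refl z])
  also have "\<dots> = z [^] (n + n)" using z by (rule nat_pow_mult)
  finally have "z [^] (n + n) = \<zero>" using n by simp
  then show ?thesis using z unfolding nilrad_def by blast
qed

lemma part2: "roughly_complemented R \<longleftrightarrow> roughly_complemented (qring R)"
proof
  assume h: "roughly_complemented R"
  show "roughly_complemented (qring R)" unfolding roughly_complemented_def
  proof
    fix X assume "X \<in> carrier (qring R)"
    then obtain a s where a: "a \<in> carrier R" "s \<in> reg R" "X = frac_class R a s" by (auto elim!: q_carrierE)
    obtain b where b: "b \<in> carrier R" "a \<otimes> b = \<zero>" "a \<oplus> b \<in> areg R"
      using h a unfolding roughly_complemented_def by blast
    have sc: "s \<in> carrier R" using a by simp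
    have m: "X \<otimes>\<^bsub>qring R\<^esub> frac_class R b s = \<zero>\<^bsub>qring R\<^esub>" using a b by (simp add: q_is_zero)
    have "X \<oplus>\<^bsub>qring R\<^esub> frac_class R b s = frac_class R (a \<oplus> b) s"
      using a b sc by (simp add: class_eq; insert a b sc; algebra)
    then have "X \<oplus>\<^bsub>qring R\<^esub> frac_class R b s \<in> areg (qring R)" using a b q_areg by simp
    then show "\<exists>Y\<in>carrier (qring R). X \<otimes>\<^bsub>qring R\<^esub> Y = \<zero>\<^bsub>qring R\<^esub> \<and> X \<oplus>\<^bsub>qring R\<^esub> Y \<in> areg (qring R)"
      using m a b by (intro bexI[of _ "frac_class R b s"]) auto
  qed
next
  assume h: "roughly_complemented (qring R)"
  interpret N: ideal "nilrad R" R by (rule nilrad_ideal)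
  show "roughly_complemented R" unfolding roughly_complemented_def
  proof
    fix a assume a: "a \<in> carrier R"
    obtain Y where Y: "Y \<in> carrier (qring R)" "frac_class R a \<one> \<otimes>\<^bsub>qring R\<^esub> Y = \<zero>\<^bsub>qring R\<^esub>"
      "frac_class R a \<one> \<oplus>\<^bsub>qring R\<^esub> Y \<in> areg (qring R)"
      using h q_carrier_class[OF a reg_one] unfolding roughly_complemented_def by blast
    then obtain b t where b: "b \<in> carrier R" "t \<in> reg R" "Y = frac_class R b t" by (auto elim!: q_carrierE)
    have tc: "t \<in> carrier R" using b by simp
    have "frac_class R (a \<otimes> b) (\<one> \<otimes> t) = \<zero>\<^bsub>qring R\<^esub>"
      using Y(2) a b unfolding b(3) by simp
    then have ab: "a \<otimes> b = \<zero>" using a b by (simp add: q_is_zero)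
    have "frac_class R (a \<otimes> t \<oplus> b \<otimes> \<one>) (\<one> \<otimes> t) \<in> areg (qring R)"
      using Y(3) a b unfolding b(3) by simp
    then have ar: "a \<otimes> t \<oplus> b \<in> areg R" using a b tc q_areg by simp
    have "a \<oplus> b \<in> areg R" unfolding areg_char
    proof (intro CollectI conjI ballI impI)
      show "a \<oplus> b \<in> carrier R" using a b by simp
      fix y assume y: "y \<in> carrier R" "(a \<oplus> b) \<otimes> y \<in> nilrad R"
      have ba: "b \<otimes> a = \<zero>" using ab a b by (simp add: m_comm)
      have e1: "(a \<otimes> y) \<otimes> (a \<otimes> y) = y \<otimes> (a \<otimes> ((a \<oplus> b) \<otimes> y))"
      proof -
        have "y \<otimes> (a \<otimes> ((a \<oplus> b) \<otimes> y)) = (a \<otimes> y) \<otimes> (a \<otimes> y) \<oplus> (a \<otimes> b) \<otimes> (y \<otimes> y)"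
          using a b y by algebra
        then show ?thesis using ab a y by simp
      qed
      have e2: "(b \<otimes> y) \<otimes> (b \<otimes> y) = y \<otimes> (b \<otimes> ((a \<oplus> b) \<otimes> y))"
      proof -
        have "y \<otimes> (b \<otimes> ((a \<oplus> b) \<otimes> y)) = (b \<otimes> a) \<otimes> (y \<otimes> y) \<oplus> (b \<otimes> y) \<otimes> (b \<otimes> y)"
          using a b y by algebra
        then show ?thesis using ba b y by simp
      qed
      have ay: "a \<otimes> y \<in> nilrad R"
      proof (rule nil_sq)
        show "a \<otimes> y \<in> carrier R" using a y(1) by (rule m_closed)
        have "a \<otimes> ((a \<oplus> b) \<otimes> y) \<in> nilrad R" using N.I_l_closed[OF y(2) a] .
        then have "y \<otimes> (a \<otimes> ((a \<oplus> b) \<otimes> y)) \<in> nilrad R" using N.I_l_closed y(1) by blast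
        then show "a \<otimes> y \<otimes> (a \<otimes> y) \<in> nilrad R" unfolding e1 .
      qed
      have by': "b \<otimes> y \<in> nilrad R"
      proof (rule nil_sq)
        show "b \<otimes> y \<in> carrier R" using b(1) y(1) by (rule m_closed)
        have "b \<otimes> ((a \<oplus> b) \<otimes> y) \<in> nilrad R" using N.I_l_closed[OF y(2) b(1)] .
        then have "y \<otimes> (b \<otimes> ((a \<oplus> b) \<otimes> y)) \<in> nilrad R" using N.I_l_closed y(1) by blast
        then show "b \<otimes> y \<otimes> (b \<otimes> y) \<in> nilrad R" unfolding e2 .
      qed
      have "t \<otimes> (a \<otimes> y) \<in> nilrad R" using N.I_l_closed[OF ay tc] .
      then have "t \<otimes> (a \<otimes> y) \<oplus> b \<otimes> y \<in> nilrad R" using by' by (rule N.a_closed)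
      moreover have "t \<otimes> (a \<otimes> y) \<oplus> b \<otimes> y = (a \<otimes> t \<oplus> b) \<otimes> y" using tc a b y by algebra
      ultimately have "(a \<otimes> t \<oplus> b) \<otimes> y \<in> nilrad R" by simp
      with ar y(1) show "y \<in> nilrad R" unfolding areg_char by blast
    qed
    then show "\<exists>b\<in>carrier R. a \<otimes> b = \<zero> \<and> a \<oplus> b \<in> areg R" using ab b by blast
  qed
qed

end

theorem mainTheorem19:
  fixes R :: "('a, 'b) ring_scheme"
  assumes "cring R"
  shows "(roughly_reduced R \<longleftrightarrow> roughly_reduced (qring R))
       \<and> (roughly_complemented R \<longleftrightarrow> roughly_complemented (qring R))"
  using cring.part1[OF assms] cring.part2[OF assms] by blast

end
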